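(* Let $\alpha \in \mathbb{R}$ be such that $\alpha/(2\pi)$ is an algebraic irrational number. For $\phi \in \mathbb{R}$ and $\epsilon>0$ define the gate complexity of $e^{i\phi}\in U(1)$ with respect to the single gate $e^{i\alpha}$ by $$C_\epsilon(\phi) = \min\{|n| : n \in \mathbb{Z},\ |e^{i\phi}-e^{in\alpha}|<\epsilon\}.$$ Then for every $\phi \in [0,2\pi)$ and every $\delta>0$ there exists $\phi'$ with $|\phi'-\phi|<\delta$ such that $$\log C_\epsilon(\phi') > \frac{1}{3}\log\left(\frac{1}{\epsilon}\right) + \mathcal{O}(\epsilon^0) \quad \text{as } \epsilon \to 0,$$ i.e. there is a constant $c$ (depending on $\alpha$ and $\phi'$) such that $\log C_\epsilon(\phi') > \frac13 \log(1/\epsilon) + c$ for all sufficiently small $\epsilon>0$.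
   Context: Since $\alpha/\pi$ is irrational, the set $\{e^{in\alpha}: n\in\mathbb{Z}\}$ is dense in $U(1)$, so $C_\epsilon(\phi)$ is finite for every $\epsilon>0$. *)

theory Defs
  imports "HOL-Analysis.Analysis" "HOL-Computational_Algebra.Polynomial"
begin

definition gate_complexity :: "real \<Rightarrow> real \<Rightarrow> real \<Rightarrow> nat" where
  "gate_complexity \<alpha> \<epsilon> \<phi> =
     (LEAST k::nat. \<exists>n::int. nat \<bar>n\<bar> = k \<and>
        cmod (cis \<phi> - cis (real_of_int n * \<alpha>)) < \<epsilon>)"

end

theory Submission
  imports Defs
begin

lemma l1: "cmod (cis x - cis y) = cmod (cis (x - y) - 1)"
proof -
  have "cis y * cis (x - y) = cis x" by (simp add: cis_mult)
  hence "cis x - cis y = cis y * (cis (x - y) - 1)"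
    by (simp add: algebra_simps)
  thus ?thesis by (simp add: norm_mult)
qed

lemma l2: "(cmod (cis t - 1))^2 = 2 - 2 * cos t"
proof -
  have "(cmod (cis t - 1))^2 = (cos t - 1)^2 + (sin t)^2"
    by (simp add: cmod_power2)
  also have "\<dots> = ((cos t)^2 + (sin t)^2) - 2 * cos t + 1"
    by (simp add: power2_diff)
  also have "\<dots> = 2 - 2 * cos t" by simp
  finally show ?thesis .
qed

lemma l3: "2 - 2 * cos (t::real) = 4 * (sin (t/2))^2"
proof -
  have "cos t = cos (2 * (t/2))" by simp
  also have "\<dots> = 1 - 2 * (sin (t/2))^2" by (rule cos_double_sin)
  finally show ?thesis by simp
qed

lemma chord_eq: "cmod (cis x - cis y) = 2 * \<bar>sin ((x - y) / 2)\<bar>"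
proof -
  have "(cmod (cis x - cis y))^2 = (2 * \<bar>sin ((x - y) / 2)\<bar>)^2"
    unfolding l1 l2 l3 by (simp add: power_mult_distrib)
  thus ?thesis by (rule power2_eq_imp_eq) auto
qed


lemma sin_M: "\<bar>sin (v::real) - v\<bar> \<le> \<bar>v\<bar>^3 / 6"
proof -
  have s: "(\<Sum>m<3. sin_coeff m * v ^ m) = v"
    by (simp add: sin_coeff_def numeral_3_eq_3)
  have f: "inverse (fact 3) = (1/6 :: real)"
    by (simp add: numeral_3_eq_3)
  show ?thesis using Maclaurin_sin_bound[of v 3] unfolding s f by simp
qed

lemma sin_lower: assumes "\<bar>u\<bar> \<le> pi/2" shows "\<bar>u\<bar> / 3 \<le> \<bar>sin u\<bar>"
proof -
  have pos: "\<bar>w\<bar> / 3 \<le> \<bar>sin w\<bar>" if w: "0 \<le> w" "w \<le> pi/2" for w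
  proof (cases "w \<le> 1")
    case True
    have "w^2 \<le> 1" using True w by (intro power_le_one) auto
    hence "w * w^2 \<le> w * 1" using w by (intro mult_left_mono) auto
    hence w3: "w^3 \<le> w" by (simp add: power3_eq_cube power2_eq_square)
    have a: "\<bar>sin w - w\<bar> \<le> w^3/6" using sin_M[of w] w by simp
    have "sin w \<ge> w - w^3/6" using a abs_ge_minus_self[of "sin w - w"] by linarith
    hence "sin w \<ge> w / 3" using w3 w by linarith
    thus ?thesis using w by simp
  next
    case False
    have "sin (1::real) \<le> sin w"
      using False w by (intro sin_monotone_2pi_le) auto
    moreover have "5/6 \<le> sin (1::real)" using sin_M[of 1] by (simp add: abs_le_iff)
    moreover have "w \<le> 2" using w pi_less_4 by linarith
    ultimately show ?thesis using w by simp
  qed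
  show ?thesis
  proof (cases "u \<ge> 0")
    case True then show ?thesis using pos[of u] assms by auto
  next
    case False then show ?thesis using pos[of "-u"] assms by auto
  qed
qed


lemma cis_shift: "cis (x + 2 * pi * of_int k) = cis x"
  by (simp add: cis_mult[symmetric])

lemma chord_upper: "cmod (cis x - cis y) \<le> \<bar>x - y\<bar>"
  using abs_sin_x_le_abs_x[of "(x - y)/2"] by (simp add: chord_eq)

lemma chord_reduce:
  assumes "cmod (cis x - cis y) < r"
  shows "\<exists>k::int. \<bar>x - y - 2 * pi * of_int k\<bar> < 3 * r"
proof -
  define k where "k = round ((x - y) / (2 * pi))"
  define t where "t = x - y - 2 * pi * of_int k"
  have "\<bar>(x - y) / (2 * pi) - of_int k\<bar> \<le> 1/2"
    using of_int_round_abs_le[of "(x - y) / (2 * pi)"] by (simp add: abs_minus_commute k_def)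
  moreover have "t = 2 * pi * ((x - y) / (2 * pi) - of_int k)"
    by (simp add: t_def field_simps)
  hence "\<bar>t\<bar> = 2 * pi * \<bar>(x - y) / (2 * pi) - of_int k\<bar>"
    by (simp add: abs_mult)
  ultimately have "\<bar>t\<bar> \<le> 2 * pi * (1/2)"
    by (metis mult_left_mono pi_ge_zero mult_nonneg_nonneg zero_le_numeral)
  hence "\<bar>t\<bar> \<le> pi" by simp
  have "x = (y + t) + 2 * pi * of_int k" by (simp add: t_def)
  hence "cis x = cis (y + t)" by (metis cis_shift)
  hence "cmod (cis x - cis y) = 2 * \<bar>sin (t / 2)\<bar>" by (simp add: chord_eq)
  moreover have "\<bar>t/2\<bar> / 3 \<le> \<bar>sin (t/2)\<bar>"
    using \<open>\<bar>t\<bar> \<le> pi\<close> by (intro sin_lower) auto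
  ultimately have "\<bar>t\<bar> < 3 * r" using assms by auto
  thus ?thesis unfolding t_def by blast
qed

lemma bad_in_ball:
  assumes "b - a \<le> 1" "r \<le> 1/2"
  shows "\<exists>c. {x\<in>{a..b}. cmod (cis x - cis y) < r} \<subseteq> ball c (3 * r)"
proof (cases "{x\<in>{a..b}. cmod (cis x - cis y) < r} = {}")
  case True then show ?thesis by auto
next
  case False
  then obtain x0 where x0: "x0 \<in> {a..b}" "cmod (cis x0 - cis y) < r" by auto
  then obtain k0 :: int where k0: "\<bar>x0 - y - 2 * pi * of_int k0\<bar> < 3 * r"
    using chord_reduce by blast
  show ?thesis
  proof (intro exI subsetI)
    fix x assume "x \<in> {x\<in>{a..b}. cmod (cis x - cis y) < r}"
    then have x: "x \<in> {a..b}" "cmod (cis x - cis y) < r" by auto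
    then obtain k :: int where k: "\<bar>x - y - 2 * pi * of_int k\<bar> < 3 * r"
      using chord_reduce by blast
    have "\<bar>x - x0\<bar> \<le> 1" using x x0 assms by auto
    have eq: "2 * pi * (of_int k - of_int k0) = (x - x0) - (x - y - 2 * pi * of_int k) + (x0 - y - 2 * pi * of_int k0)"
      by (simp add: algebra_simps)
    have "\<bar>2 * pi * (of_int k - of_int k0)\<bar> < 2 * pi * 1"
      unfolding eq using k k0 assms pi_gt3 \<open>\<bar>x - x0\<bar> \<le> 1\<close> by linarith
    hence "2 * pi * \<bar>of_int k - of_int k0\<bar> < 2 * pi * 1" by (simp add: abs_mult)
    hence "\<bar>of_int k - of_int k0 :: real\<bar> < 1" using pi_gt_zero by (simp only: mult_less_cancel_left_pos)
    hence "k = k0" by linarith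
    thus "x \<in> ball (y + 2 * pi * of_int k0) (3 * r)"
      using k by (simp add: dist_real_def abs_minus_commute algebra_simps)
  qed
qed


lemma good_point:
  fixes \<alpha> \<phi> \<delta> :: real
  assumes "\<delta> > 0"
  shows "\<exists>x K. \<bar>x - \<phi>\<bar> < \<delta> \<and> K > 0 \<and>
     (\<forall>n::int. K / (\<bar>of_int n\<bar> + 1)^3 \<le> cmod (cis x - cis (of_int n * \<alpha>)))"
proof -
  define d where "d = min (\<delta>/2) (1/4)"
  have d: "d > 0" "d < \<delta>" "d \<le> 1/4" using assms by (auto simp: d_def)
  define a where "a = \<phi> - d"
  define b where "b = \<phi> + d"
  have ab: "b - a \<le> 1" "a \<le> b" "b - a = 2 * d" using d by (auto simp: a_def b_def)
  define f where "f m = 1 / (real m + 1)^3" for m :: nat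
  have f_nonneg: "f m \<ge> 0" for m by (simp add: f_def)
  have f_le1: "f m \<le> 1" for m by (simp add: f_def)
  have sumf: "summable f"
  proof -
    have "summable (\<lambda>m. inverse (real m ^ 3))"
      by (rule inverse_power_summable) auto
    hence "summable (\<lambda>m. inverse (real (Suc m) ^ 3))"
      by (subst summable_Suc_iff)
    thus ?thesis by (simp add: f_def[abs_def] inverse_eq_divide add.commute)
  qed
  define S where "S = suminf f"
  have S0: "S \<ge> 0" unfolding S_def using sumf f_nonneg by (simp add: suminf_nonneg)
  define K where "K = min (1/2) (d / (12 * S + 1))"
  have K: "K > 0" "K \<le> 1/2" using d S0 by (auto simp: K_def)
  have KS: "12 * K * S < b - a"
  proof -
    have Kle: "K \<le> d / (12 * S + 1)" by (simp add: K_def)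
    have "K * (12 * S + 1) \<le> d / (12 * S + 1) * (12 * S + 1)"
      using mult_right_mono[OF Kle, of "12 * S + 1"] S0 by simp
    also have "\<dots> = d" using S0 by simp
    finally have "K * (12 * S + 1) \<le> d" .
    moreover have "12 * K * S = K * (12 * S + 1) - K" by (simp add: algebra_simps)
    ultimately show ?thesis using ab d K by linarith
  qed
  define r where "r m = K * f m" for m
  have r_le: "r m \<le> 1/2" for m using K f_le1[of m] f_nonneg[of m]
    using mult_mono[of K "1/2" "f m" 1] unfolding r_def by simp
  have r_nonneg: "r m \<ge> 0" for m using K f_nonneg[of m] by (simp add: r_def)
  have "\<forall>m. \<exists>c. {x\<in>{a..b}. cmod (cis x - cis (of_int (int m) * \<alpha>)) < r m} \<subseteq> ball c (3 * r m)"
    using bad_in_ball[OF ab(1) r_le] by blast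
  then obtain c1 where c1: "\<And>m. {x\<in>{a..b}. cmod (cis x - cis (of_int (int m) * \<alpha>)) < r m} \<subseteq> ball (c1 m) (3 * r m)"
    by metis
  have "\<forall>m. \<exists>c. {x\<in>{a..b}. cmod (cis x - cis (of_int (- int m) * \<alpha>)) < r m} \<subseteq> ball c (3 * r m)"
    using bad_in_ball[OF ab(1) r_le] by blast
  then obtain c2 where c2: "\<And>m. {x\<in>{a..b}. cmod (cis x - cis (of_int (- int m) * \<alpha>)) < r m} \<subseteq> ball (c2 m) (3 * r m)"
    by metis
  define T where "T m = ball (c1 m) (3 * r m) \<union> ball (c2 m) (3 * r m)" for m
  have T_meas: "T m \<in> sets borel" for m by (simp add: T_def)
  have T_em: "emeasure lborel (T m) \<le> ennreal (12 * r m)" for m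
  proof -
    have "emeasure lborel (T m) \<le> emeasure lborel (ball (c1 m) (3 * r m)) + emeasure lborel (ball (c2 m) (3 * r m))"
      unfolding T_def by (rule emeasure_subadditive) auto
    also have "\<dots> = ennreal (6 * r m) + ennreal (6 * r m)"
      using r_nonneg[of m] by (simp add: ball_eq_greaterThanLessThan)
    also have "\<dots> = ennreal (12 * r m)"
      using r_nonneg[of m] by (simp flip: ennreal_plus)
    finally show ?thesis .
  qed
  have "\<exists>x\<in>{a..b}. \<forall>m. x \<notin> T m"
  proof (rule ccontr)
    assume "\<not> ?thesis"
    hence sub: "{a..b} \<subseteq> (\<Union>m. T m)" by blast
    have "ennreal (b - a) = emeasure lborel {a..b}" using ab by simp
    also have "\<dots> \<le> emeasure lborel (\<Union>m. T m)"
    proof (rule emeasure_mono[OF sub])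
      have "open (\<Union>m. T m)" unfolding T_def by (intro open_UN ballI open_Un open_ball)
      thus "(\<Union>m. T m) \<in> sets lborel" by simp
    qed
    also have "\<dots> \<le> (\<Sum>m. emeasure lborel (T m))"
      by (rule emeasure_subadditive_countably) (auto simp: T_meas)
    also have "\<dots> \<le> (\<Sum>m. ennreal (12 * r m))"
      by (intro suminf_le T_em) auto
    also have "(\<Sum>m. ennreal (12 * r m)) = ennreal (12 * K * S)"
    proof (rule suminf_ennreal_eq)
      show "\<And>i. 0 \<le> 12 * r i" using r_nonneg by simp
      have "f sums S" using sumf by (simp add: S_def summable_sums)
      hence "(\<lambda>m. (12 * K) * f m) sums ((12 * K) * S)" by (rule sums_mult)
      thus "(\<lambda>m. 12 * r m) sums (12 * K * S)" by (simp add: r_def mult.assoc)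
    qed
    finally have "b - a \<le> 12 * K * S"
      using K S0 by (subst (asm) ennreal_le_iff) auto
    with KS show False by simp
  qed
  then obtain x where x: "x \<in> {a..b}" "\<And>m. x \<notin> T m" by blast
  have "\<forall>n::int. K / (\<bar>of_int n\<bar> + 1)^3 \<le> cmod (cis x - cis (of_int n * \<alpha>))"
  proof
    fix n :: int
    define m where "m = nat \<bar>n\<bar>"
    have rm: "r m = K / (\<bar>of_int n\<bar> + 1)^3"
      by (simp add: r_def f_def m_def)
    show "K / (\<bar>of_int n\<bar> + 1)^3 \<le> cmod (cis x - cis (of_int n * \<alpha>))"
    proof (rule ccontr)
      assume "\<not> ?thesis"
      hence lt: "cmod (cis x - cis (of_int n * \<alpha>)) < r m" by (simp add: rm)
      show False
      proof (cases "n \<ge> 0")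
        case True
        hence "n = int m" by (simp add: m_def)
        hence "x \<in> ball (c1 m) (3 * r m)" using c1[of m] lt x(1) by auto
        thus False using x(2)[of m] by (simp add: T_def)
      next
        case False
        hence "n = - int m" by (simp add: m_def)
        hence "x \<in> ball (c2 m) (3 * r m)" using c2[of m] lt x(1) by auto
        thus False using x(2)[of m] by (simp add: T_def)
      qed
    qed
  qed
  moreover have "\<bar>x - \<phi>\<bar> < \<delta>" using x(1) d by (auto simp: a_def b_def)
  ultimately show ?thesis using K by blast
qed

lemma density_point:
  fixes \<alpha> x \<epsilon> :: real
  assumes "\<alpha> / (2 * pi) \<notin> \<rat>" "\<epsilon> > 0"
  shows "\<exists>n::int. cmod (cis x - cis (of_int n * \<alpha>)) < \<epsilon>"
proof -
  have "\<epsilon> / (2 * pi) > 0" using assms by simp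
  then obtain h k :: int where hk: "\<bar>of_int k * (\<alpha> / (2 * pi)) - of_int h - x / (2 * pi)\<bar> < \<epsilon> / (2 * pi)"
    using sequence_of_fractional_parts_is_dense[OF assms(1)] by metis
  have "of_int k * \<alpha> - 2 * pi * of_int h - x = 2 * pi * (of_int k * (\<alpha> / (2 * pi)) - of_int h - x / (2 * pi))"
    by (simp add: field_simps)
  hence "\<bar>of_int k * \<alpha> - 2 * pi * of_int h - x\<bar> = 2 * pi * \<bar>of_int k * (\<alpha> / (2 * pi)) - of_int h - x / (2 * pi)\<bar>"
    by (simp add: abs_mult)
  also have "\<dots> < 2 * pi * (\<epsilon> / (2 * pi))"
    using hk by (intro mult_strict_left_mono) auto
  also have "\<dots> = \<epsilon>" by simp
  finally have lt: "\<bar>x - (of_int k * \<alpha> - 2 * pi * of_int h)\<bar> < \<epsilon>" by linarith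
  have "cis (of_int k * \<alpha>) = cis ((of_int k * \<alpha> - 2 * pi * of_int h) + 2 * pi * of_int h)"
    by simp
  hence "cis (of_int k * \<alpha>) = cis (of_int k * \<alpha> - 2 * pi * of_int h)"
    by (metis cis_shift)
  hence "cmod (cis x - cis (of_int k * \<alpha>)) < \<epsilon>"
    using chord_upper[of x "of_int k * \<alpha> - 2 * pi * of_int h"] lt by simp
  thus ?thesis by blast
qed

lemma final_bound:
  fixes y K \<epsilon> :: real
  assumes "K > 0" "\<epsilon> > 0" "\<epsilon> < K / 8" "y \<ge> 0" "K / (y + 1)^3 < \<epsilon>"
  shows "ln y > ln (1 / \<epsilon>) / 3 + (ln K - ln 8) / 3"
proof -
  have "K < \<epsilon> * (y + 1)^3" using assms(5) assms(4) by (simp add: field_simps)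
  hence A: "K / \<epsilon> < (y + 1)^3" using assms(2) by (simp add: field_simps)
  have "8 < K / \<epsilon>" using assms(2,3) by (simp add: field_simps)
  hence "2 < y + 1"
  proof -
    assume h: "8 < K / \<epsilon>"
    show ?thesis
    proof (rule ccontr)
      assume "\<not> 2 < y + 1"
      hence "(y + 1)^3 \<le> 2^3" using assms(4) by (intro power_mono) auto
      thus False using h A by simp
    qed
  qed
  hence y1: "y > 1" by simp
  have "(y + 1)^3 \<le> (2 * y)^3" using y1 by (intro power_mono) auto
  hence "K / \<epsilon> < 8 * y^3" using A by (simp add: power_mult_distrib)
  hence B: "K / (8 * \<epsilon>) < y^3" by (simp add: field_simps)
  have pos: "K / (8 * \<epsilon>) > 0" using assms by simp
  have "ln (K / (8 * \<epsilon>)) < ln (y^3)" using B pos y1 by (subst ln_less_cancel_iff) auto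
  also have "ln (y^3) = 3 * ln y" using y1 by (simp add: ln_realpow)
  finally have C: "ln (K / (8 * \<epsilon>)) < 3 * ln y" .
  have E1: "ln (K / (8 * \<epsilon>)) = ln K - ln 8 - ln \<epsilon>"
    using assms by (simp add: ln_div ln_mult)
  have E2: "ln (1 / \<epsilon>) = - ln \<epsilon>" using assms by (simp add: ln_div)
  have F: "ln K - ln 8 - ln \<epsilon> < 3 * ln y" using C unfolding E1 .
  show ?thesis unfolding E2 using F by (simp add: field_simps)
qed

theorem proposition1:
  fixes \<alpha> :: real
  assumes "algebraic (\<alpha> / (2 * pi))"
    and "\<alpha> / (2 * pi) \<notin> \<rat>"
  shows "\<forall>\<phi> \<in> {0..<2 * pi}. \<forall>\<delta> > 0. \<exists>\<phi>'. \<bar>\<phi>' - \<phi>\<bar> < \<delta> \<and>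
           (\<exists>c::real. \<forall>\<^sub>F \<epsilon> in at_right 0.
              ln (real (gate_complexity \<alpha> \<epsilon> \<phi>')) > ln (1 / \<epsilon>) / 3 + c)"
proof (intro ballI allI impI)
  fix \<phi> \<delta> :: real
  assume "\<delta> > 0"
  then obtain x K where xK: "\<bar>x - \<phi>\<bar> < \<delta>" "K > 0"
    "\<And>n::int. K / (\<bar>of_int n\<bar> + 1)^3 \<le> cmod (cis x - cis (of_int n * \<alpha>))"
    using good_point[of \<delta> \<phi> \<alpha>] by blast
  have ev: "\<forall>\<^sub>F \<epsilon> in at_right 0.
      ln (real (gate_complexity \<alpha> \<epsilon> x)) > ln (1 / \<epsilon>) / 3 + (ln K - ln 8) / 3"
    unfolding eventually_at_right_field
  proof (intro exI conjI allI impI)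
    show "(0::real) < K / 8" using xK by simp
    fix \<epsilon> :: real assume e: "0 < \<epsilon>" "\<epsilon> < K / 8"
    define P where "P j = (\<exists>n::int. nat \<bar>n\<bar> = j \<and> cmod (cis x - cis (of_int n * \<alpha>)) < \<epsilon>)" for j
    obtain n0 :: int where "cmod (cis x - cis (of_int n0 * \<alpha>)) < \<epsilon>"
      using density_point[OF assms(2) e(1)] by blast
    hence "P (nat \<bar>n0\<bar>)" by (auto simp: P_def)
    hence "P (LEAST j. P j)" by (rule LeastI)
    moreover have "gate_complexity \<alpha> \<epsilon> x = (LEAST j. P j)"
      by (simp add: gate_complexity_def P_def)
    ultimately obtain n :: int where n: "nat \<bar>n\<bar> = gate_complexity \<alpha> \<epsilon> x"
      "cmod (cis x - cis (of_int n * \<alpha>)) < \<epsilon>"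
      by (auto simp: P_def)
    have y: "real (gate_complexity \<alpha> \<epsilon> x) = \<bar>of_int n\<bar>"
      using n(1) by (metis of_int_abs of_int_of_nat_eq abs_ge_zero nat_0_le)
    have "K / (real (gate_complexity \<alpha> \<epsilon> x) + 1)^3 < \<epsilon>"
      using xK(3)[of n] n(2) y by simp
    thus "ln (real (gate_complexity \<alpha> \<epsilon> x)) > ln (1 / \<epsilon>) / 3 + (ln K - ln 8) / 3"
      using final_bound[OF xK(2) e] by simp
  qed
  show "\<exists>\<phi>'. \<bar>\<phi>' - \<phi>\<bar> < \<delta> \<and>
           (\<exists>c::real. \<forall>\<^sub>F \<epsilon> in at_right 0.
              ln (real (gate_complexity \<alpha> \<epsilon> \<phi>')) > ln (1 / \<epsilon>) / 3 + c)"
    using xK(1) ev by blast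
qed


end
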